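(* Let $h:\mathbb{R}^p\times[t_0,t_f)\to\mathbb{R}$ be continuously differentiable with $\frac{\partial}{\partial \mathbf{p}}h(\mathbf{p},t)\neq \mathbf{0}$ whenever $h(\mathbf{p},t)=0$. Suppose that at every $(\mathbf{p},t)$ with $\frac{\partial}{\partial \mathbf{p}}h(\mathbf{p},t)=\mathbf{0}$ and $h(\mathbf{p},t)>0$ we have $\frac{\partial h(\mathbf{p},t)}{\partial t}\ge 0$. Then $h$ is a CBF for the system $\dot{\mathbf{p}}=\mathbf{f}(\mathbf{p})+\mathbf{G}(\mathbf{p})\mathbf{z}$, and this holds with an arbitrary choice of the associated extended class-$\mathcal{K}_\infty$ function $\alpha$.
   Context: Agent model (first-order): $\dot{\mathbf{p}}=\mathbf{f}(\mathbf{p})+\mathbf{G}(\mathbf{p})\mathbf{z}$ with state $\mathbf{p}\in\mathbb{R}^p$, input $\mathbf{z}\in\mathbb{R}^z$, $\mathbf{f}:\mathbb{R}^p\to\mathbb{R}^p$ and $\mathbf{G}:\mathbb{R}^p\to\mathbb{R}^{p\times z}$ locally Lipschitz, and $\mathbf{G}(\mathbf{p})$ of full row rank for every $\mathbf{p}$. A continuous $\alpha:\mathbb{R}\to\mathbb{R}$ is an extended class-$\mathcal{K}_\infty$ function if it is strictly increasing, $\alpha(0)=0$, and $\lim_{s\to\pm\infty}\alpha(s)=\pm\infty$. A set-valued flow $\mathcal{D}:[t_0,t_f)\rightrightarrows\mathbb{R}^p$ has graph $\mathcal{G}(\mathcal{D})=\{(\mathbf{p},t):t\in[t_0,t_f),\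 \mathbf{p}\in\mathcal{D}(t)\}$. CBF definition: given a continuously differentiable $h:\mathbb{R}^p\times[t_0,t_f)\to\mathbb{R}$ with $\frac{\partial}{\partial\mathbf{p}}h\neq\mathbf{0}$ whenever $h=0$, let $\mathcal{C}(t)=\{\mathbf{p}:h(\mathbf{p},t)\ge0\}$. Then $h$ is a (zeroing) control barrier function (CBF) for the system if there exist a set-valued flow $\mathcal{D}$ with $\mathcal{C}(t)\subseteq\mathcal{D}(t)$ for all $t$ and an extended class-$\mathcal{K}_\infty$ function $\alpha$ such that for all $(\mathbf{p},t)\in\mathcal{G}(\mathcal{D})$, $\sup_{\mathbf{z}\in\mathbb{R}^z}\dot h(\mathbf{p},t,\mathbf{z})>-\alpha(h(\mathbf{p},t))$, where $\dot h(\mathbf{p},t,\mathbf{z})=\frac{\partial h}{\partial\mathbf{p}}(\mathbf{p},t)\big(\mathbf{f}(\mathbf{p})+\mathbf{G}(\mathbf{p})\mathbf{z}\big)+\frac{\partial h}{\partial t}(\mathbf{p},t)$. *)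

theory Defs
  imports "HOL-Analysis.Analysis" "HOL-Library.Extended_Real"
begin

definition loc_lipschitz :: "('a::metric_space \<Rightarrow> 'b::metric_space) \<Rightarrow> bool" where
  "loc_lipschitz F \<longleftrightarrow> (\<forall>x. \<exists>U L. open U \<and> x \<in> U \<and> L-lipschitz_on U F)"

definition ext_class_Kinf :: "(real \<Rightarrow> real) \<Rightarrow> bool" where
  "ext_class_Kinf a \<longleftrightarrow> continuous_on UNIV a \<and> strict_mono a \<and> a 0 = 0
     \<and> filterlim a at_top at_top \<and> filterlim a at_bot at_bot"

definition time_dom :: "real \<Rightarrow> ereal \<Rightarrow> real set" where
  "time_dom t0 tf = {t. t0 \<le> t \<and> ereal t < tf}"

text \<open>h is continuously differentiable on R^p x [t0,tf) (jointly in (p,t), one-sided at t0),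
  with partial gradient in p given by Dp and partial time derivative given by Dt
  (these are uniquely determined by h since t0 < tf).\<close>
definition C1_with_partials ::
  "(real^'p \<Rightarrow> real \<Rightarrow> real) \<Rightarrow> (real^'p \<Rightarrow> real \<Rightarrow> real^'p) \<Rightarrow> (real^'p \<Rightarrow> real \<Rightarrow> real)
   \<Rightarrow> real set \<Rightarrow> bool" where
  "C1_with_partials h Dp Dt T \<longleftrightarrow>
     continuous_on (UNIV \<times> T) (\<lambda>(x,t). Dp x t) \<and>
     continuous_on (UNIV \<times> T) (\<lambda>(x,t). Dt x t) \<and>
     (\<forall>x. \<forall>t\<in>T. ((\<lambda>(y,s). h y s) has_derivative (\<lambda>(dy,ds). Dp x t \<bullet> dy + Dt x t * ds))
                      (at (x,t) within UNIV \<times> T))"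

definition hdot ::
  "(real^'p \<Rightarrow> real^'p) \<Rightarrow> (real^'p \<Rightarrow> real^'z^'p) \<Rightarrow> (real^'p \<Rightarrow> real \<Rightarrow> real^'p)
   \<Rightarrow> (real^'p \<Rightarrow> real \<Rightarrow> real) \<Rightarrow> real^'p \<Rightarrow> real \<Rightarrow> real^'z \<Rightarrow> real" where
  "hdot f G Dp Dt x t z = Dp x t \<bullet> (f x + G x *v z) + Dt x t"

definition safe_set :: "(real^'p \<Rightarrow> real \<Rightarrow> real) \<Rightarrow> real \<Rightarrow> (real^'p) set" where
  "safe_set h t = {x. h x t \<ge> 0}"

definition CBF_cond_with ::
  "(real^'p \<Rightarrow> real^'p) \<Rightarrow> (real^'p \<Rightarrow> real^'z^'p) \<Rightarrow> (real^'p \<Rightarrow> real \<Rightarrow> real)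
   \<Rightarrow> (real^'p \<Rightarrow> real \<Rightarrow> real^'p) \<Rightarrow> (real^'p \<Rightarrow> real \<Rightarrow> real) \<Rightarrow> real set
   \<Rightarrow> (real \<Rightarrow> real) \<Rightarrow> bool" where
  "CBF_cond_with f G h Dp Dt T alpha \<longleftrightarrow>
     (\<exists>D :: real \<Rightarrow> (real^'p) set.
        (\<forall>t\<in>T. safe_set h t \<subseteq> D t) \<and>
        (\<forall>t\<in>T. \<forall>x\<in>D t. (SUP z. ereal (hdot f G Dp Dt x t z)) > ereal (- alpha (h x t))))"

definition is_CBF ::
  "(real^'p \<Rightarrow> real^'p) \<Rightarrow> (real^'p \<Rightarrow> real^'z^'p) \<Rightarrow> (real^'p \<Rightarrow> real \<Rightarrow> real)
   \<Rightarrow> (real^'p \<Rightarrow> real \<Rightarrow> real^'p) \<Rightarrow> (real^'p \<Rightarrow> real \<Rightarrow> real) \<Rightarrow> real set \<Rightarrow> bool" where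
  "is_CBF f G h Dp Dt T \<longleftrightarrow>
     C1_with_partials h Dp Dt T \<and>
     (\<forall>x. \<forall>t\<in>T. h x t = 0 \<longrightarrow> Dp x t \<noteq> 0) \<and>
     (\<exists>alpha. ext_class_Kinf alpha \<and> CBF_cond_with f G h Dp Dt T alpha)"

end

theory Submission
  imports Defs
begin

lemma ext_id: "ext_class_Kinf (\<lambda>x. x)"
  unfolding ext_class_Kinf_def
  by (auto simp: strict_mono_def filterlim_ident continuous_on_id)

lemma cond_all:
  fixes f :: "real^'p \<Rightarrow> real^'p"
    and G :: "real^'p \<Rightarrow> real^'z^'p"
    and h :: "real^'p \<Rightarrow> real \<Rightarrow> real"
    and Dp :: "real^'p \<Rightarrow> real \<Rightarrow> real^'p"
    and Dt :: "real^'p \<Rightarrow> real \<Rightarrow> real"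
  assumes rk: "\<forall>x. rank (G x) = CARD('p)"
    and nz: "\<forall>x. \<forall>t\<in>T. h x t = 0 \<longrightarrow> Dp x t \<noteq> 0"
    and dt: "\<forall>x. \<forall>t\<in>T. Dp x t = 0 \<and> h x t > 0 \<longrightarrow> Dt x t \<ge> 0"
    and al: "ext_class_Kinf alpha"
  shows "CBF_cond_with f G h Dp Dt T alpha"
  unfolding CBF_cond_with_def
proof (intro exI[of _ "safe_set h"] conjI ballI)
  fix t x assume t: "t \<in> T" and x: "x \<in> safe_set h t"
  then have h0: "h x t \<ge> 0" by (simp add: safe_set_def)
  have sm: "strict_mono alpha" and a0: "alpha 0 = 0" using al by (auto simp: ext_class_Kinf_def)
  have apos: "alpha (h x t) \<ge> 0"
    using h0 a0 sm by (metis order.order_iff_strict strict_mono_less)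
  show "ereal (- alpha (h x t)) < (SUP z. ereal (hdot f G Dp Dt x t z))"
  proof (cases "Dp x t = 0")
    case True
    then have hp: "h x t > 0" using nz t h0 by force
    then have "alpha (h x t) > 0" using a0 sm by (metis strict_mono_less)
    moreover have "Dt x t \<ge> 0" using dt t True hp by blast
    ultimately have "ereal (- alpha (h x t)) < ereal (hdot f G Dp Dt x t 0)"
      using True by (simp add: hdot_def)
    also have "\<dots> \<le> (SUP z. ereal (hdot f G Dp Dt x t z))" by (rule SUP_upper) auto
    finally show ?thesis .
  next
    case False
    define d where "d = Dp x t"
    define c where "c = (- alpha (h x t) + 1 - d \<bullet> f x - Dt x t) / (d \<bullet> d)"
    have dd: "d \<bullet> d \<noteq> 0" using False d_def by simp
    have "surj ((*v) (G x))" using rk full_rank_surjective by blast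
    then obtain z where z: "G x *v z = c *\<^sub>R d" by (metis surjD)
    have "hdot f G Dp Dt x t z = - alpha (h x t) + 1"
      unfolding hdot_def z d_def[symmetric] using dd
      by (simp add: inner_add_right c_def field_simps)
    then have "ereal (- alpha (h x t)) < ereal (hdot f G Dp Dt x t z)" by simp
    also have "\<dots> \<le> (SUP z. ereal (hdot f G Dp Dt x t z))" by (rule SUP_upper) auto
    finally show ?thesis .
  qed
qed auto

theorem mainTheorem1:
  fixes f :: "real^'p \<Rightarrow> real^'p"
    and G :: "real^'p \<Rightarrow> real^'z^'p"
    and h :: "real^'p \<Rightarrow> real \<Rightarrow> real"
    and Dp :: "real^'p \<Rightarrow> real \<Rightarrow> real^'p"
    and Dt :: "real^'p \<Rightarrow> real \<Rightarrow> real"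
    and t0 :: real and tf :: ereal
  assumes "ereal t0 < tf"
    and "loc_lipschitz f" and "loc_lipschitz G"
    and "\<forall>x. rank (G x) = CARD('p)"
    and "C1_with_partials h Dp Dt (time_dom t0 tf)"
    and "\<forall>x. \<forall>t\<in>time_dom t0 tf. h x t = 0 \<longrightarrow> Dp x t \<noteq> 0"
    and "\<forall>x. \<forall>t\<in>time_dom t0 tf. Dp x t = 0 \<and> h x t > 0 \<longrightarrow> Dt x t \<ge> 0"
  shows "is_CBF f G h Dp Dt (time_dom t0 tf) \<and>
         (\<forall>alpha. ext_class_Kinf alpha \<longrightarrow> CBF_cond_with f G h Dp Dt (time_dom t0 tf) alpha)"
proof -
  have A: "\<forall>alpha. ext_class_Kinf alpha \<longrightarrow> CBF_cond_with f G h Dp Dt (time_dom t0 tf) alpha"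
    using cond_all[OF assms(4) assms(6) assms(7)] by blast
  show ?thesis unfolding is_CBF_def using A ext_id assms(5) assms(6) by blast
qed

end
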